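(* In the situation of Theorem 2 (a fully regular system $A(y)=b$ with $A=A_\ell\sigma^\ell+\dots+A_0$, $A_i\in\mathbb{F}[t]^{n\times n}$, $b\in\mathbb{F}[t]^n$, $\det A_\ell\neq 0$; a $P\in\mathrm{GL}_n(\mathbb{F}(t)[\sigma,\sigma^{-1}])$ with $PA=\sum_{i=0}^{\tilde\ell}\tilde A_i\sigma^i$, $\tilde A_i\in\mathbb{F}[t]^{n\times n}$, $P(b)\in\mathbb{F}[t]^n$, $\det\tilde A_0\ne0$; $m$ the common denominator of $A_\ell^{-1}$, $p$ the common denominator of $\tilde A_0^{-1}$; and a solution $y=d^{-1}z$ in reduced representation), one has $$\mathrm{disp}(\operatorname{ap}(d))\le\mathrm{disp}\big(\sigma^{-\ell}(\operatorname{ap}(m)),\operatorname{ap}(p)\big).$$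
   Context: All fields contain $\mathbb{Q}$. $(\mathbb{F}(t),\sigma)$ is a $\Pi\Sigma$-extension of the difference field $(\mathbb{F},\sigma)$: $\sigma$ is an automorphism of the rational function field $\mathbb{F}(t)$ restricting to an automorphism of $\mathbb{F}$, with $\sigma(t)=t+\beta$ ($\beta\in\mathbb{F}\setminus\{0\}$, $\Sigma$-monomial) or $\sigma(t)=\alpha t$ ($\alpha\in\mathbb{F}\setminus\{0\}$, $\Pi$-monomial), and the fixed field of $\sigma$ on $\mathbb{F}(t)$ equals that on $\mathbb{F}$. For $a,b\in\mathbb{F}[t]\setminus\{0\}$: $\mathrm{spread}(a,b)=\{k\ge0:\gcd(a,\sigma^k(b))\notin\mathbb{F}\}$, $\mathrm{disp}(a,b)=\max\mathrm{spread}(a,b)$ ($\max\emptyset=-\infty$, max of infinite set $=\infty$), $\mathrm{disp}(a)=\mathrm{disp}(a,a)$. $\mathrm{per}(a)=1$ for a $\Sigma$-monomial, $t^\mu$ with $\mu$ maximal such that $t^\mu\mid a$ for a $\Pi$-monomial; $\operatorname{ap}(a)=a/\mathrm{per}(a)$. Reduced representation: $d\in\mathbb{F}[t]\setminus\{0\}$, $z\in\mathbb{F}[t]^n$, $\gcd(z_1,\dots,z_n,d)=1$. $\mathbb{F}(t)[\sigma]$ is the Ore polynomial ring with $\sigma a=\sigma(a)\sigma$, $\mathbb{F}(t)[\sigma,\sigma^{-1}]$ its localisation at powers of $\sigma$; operators act on $\mathbb{F}(t)$ by $(\sum a_i\sigma^i)(\alpha)=\sum a_i\sigma^i(\alpha)$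 and operator matrices act on vectors entrywise as matrix–vector products; unimodular means invertible over the same ring. A square system $A(y)=b$ with $A=\sum_{i=0}^\ell A_i\sigma^i$ is fully regular if $\det A_\ell\ne0$ and there is a unimodular $P$ over $\mathbb{F}(t)[\sigma,\sigma^{-1}]$ with $PA\in\mathbb{F}(t)[\sigma]^{n\times n}$ having trailing coefficient matrix of nonzero determinant. *)

theory Defs
  imports "HOL-Computational_Algebra.Computational_Algebra" "HOL-Library.Extended_Real"
    "Jordan_Normal_Form.Determinant" "Jordan_Normal_Form.Gauss_Jordan_Elimination"
begin

text \<open>The ground field F is a type 'a of class field_char_0 (contains Q); F[t] = 'a poly,
  F(t) = 'a poly fract.  The difference operator sigma is an automorphism of F(t).\<close>

definition pf :: "'a::idom \<Rightarrow> 'a fract" where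
  "pf p = Fract p 1"

definition Tvar :: "'a::field poly fract" where
  "Tvar = pf [:0, 1:]"

definition constF :: "'a::field poly fract set" where
  "constF = range (\<lambda>c. pf [:c:])"

definition is_field_aut :: "('k::field \<Rightarrow> 'k) \<Rightarrow> bool" where
  "is_field_aut \<sigma> \<longleftrightarrow> bij \<sigma> \<and> (\<forall>x y. \<sigma> (x + y) = \<sigma> x + \<sigma> y) \<and> (\<forall>x y. \<sigma> (x * y) = \<sigma> x * \<sigma> y)"

definition sigma_pow :: "('k \<Rightarrow> 'k) \<Rightarrow> int \<Rightarrow> 'k \<Rightarrow> 'k" where
  "sigma_pow \<sigma> k = (if k \<ge> 0 then \<sigma> ^^ nat k else (inv_into UNIV \<sigma>) ^^ nat (- k))"

definition Sigma_monomial :: "('a::field poly fract \<Rightarrow> 'a poly fract) \<Rightarrow> bool" where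
  "Sigma_monomial \<sigma> \<longleftrightarrow> (\<exists>\<beta>. \<beta> \<noteq> 0 \<and> \<sigma> Tvar = Tvar + pf [:\<beta>:])"

definition Pi_monomial :: "('a::field poly fract \<Rightarrow> 'a poly fract) \<Rightarrow> bool" where
  "Pi_monomial \<sigma> \<longleftrightarrow> (\<exists>\<alpha>. \<alpha> \<noteq> 0 \<and> \<sigma> Tvar = pf [:\<alpha>:] * Tvar)"

definition PiSigma_ext :: "('a::field poly fract \<Rightarrow> 'a poly fract) \<Rightarrow> bool" where
  "PiSigma_ext \<sigma> \<longleftrightarrow> is_field_aut \<sigma> \<and> \<sigma> ` constF = constF
     \<and> (Sigma_monomial \<sigma> \<or> Pi_monomial \<sigma>)
     \<and> {x. \<sigma> x = x} = {x \<in> constF. \<sigma> x = x}"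

text \<open>sigma^k applied to a polynomial (the result is again a polynomial).\<close>
definition sig_poly :: "('a::field poly fract \<Rightarrow> 'a poly fract) \<Rightarrow> int \<Rightarrow> 'a poly \<Rightarrow> 'a poly" where
  "sig_poly \<sigma> k p = (THE q. pf q = sigma_pow \<sigma> k (pf p))"

definition spread :: "('a::{field_gcd,field_char_0} poly fract \<Rightarrow> 'a poly fract) \<Rightarrow> 'a poly \<Rightarrow> 'a poly \<Rightarrow> nat set" where
  "spread \<sigma> a b = {k. degree (gcd a (sig_poly \<sigma> (int k) b)) \<noteq> 0}"

text \<open>max of the spread, with max {} = -infinity and max of an infinite set = infinity.\<close>
definition disp :: "('a::{field_gcd,field_char_0} poly fract \<Rightarrow> 'a poly fract) \<Rightarrow> 'a poly \<Rightarrow> 'a poly \<Rightarrow> ereal" where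
  "disp \<sigma> a b = Sup ((\<lambda>k. ereal (real k)) ` spread \<sigma> a b)"

definition per :: "('a::field poly fract \<Rightarrow> 'a poly fract) \<Rightarrow> 'a poly \<Rightarrow> 'a poly" where
  "per \<sigma> a = (if Pi_monomial \<sigma> then [:0, 1:] ^ order 0 a else 1)"

definition ap :: "('a::field poly fract \<Rightarrow> 'a poly fract) \<Rightarrow> 'a poly \<Rightarrow> 'a poly" where
  "ap \<sigma> a = a div per \<sigma> a"

text \<open>Elements of F(t)[sigma, sigma^-1]: coefficient functions int => F(t) with finite support
  (L represents sum_i L i * sigma^i).  Operator matrices: nat => nat => (int => F(t)), indices < n.\<close>

definition ore_mult :: "('k::field \<Rightarrow> 'k) \<Rightarrow> (int \<Rightarrow> 'k) \<Rightarrow> (int \<Rightarrow> 'k) \<Rightarrow> (int \<Rightarrow> 'k)" where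
  "ore_mult \<sigma> L1 L2 = (\<lambda>k. \<Sum>i\<in>{i. L1 i \<noteq> 0}. L1 i * sigma_pow \<sigma> i (L2 (k - i)))"

definition op_apply :: "('k::field \<Rightarrow> 'k) \<Rightarrow> (int \<Rightarrow> 'k) \<Rightarrow> 'k \<Rightarrow> 'k" where
  "op_apply \<sigma> L y = (\<Sum>i\<in>{i. L i \<noteq> 0}. L i * sigma_pow \<sigma> i y)"

definition omat_mult :: "('k::field \<Rightarrow> 'k) \<Rightarrow> nat \<Rightarrow> (nat \<Rightarrow> nat \<Rightarrow> int \<Rightarrow> 'k) \<Rightarrow> (nat \<Rightarrow> nat \<Rightarrow> int \<Rightarrow> 'k) \<Rightarrow> (nat \<Rightarrow> nat \<Rightarrow> int \<Rightarrow> 'k)" where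
  "omat_mult \<sigma> n P Q = (\<lambda>r c k. \<Sum>l<n. ore_mult \<sigma> (P r l) (Q l c) k)"

definition omat_one :: "nat \<Rightarrow> nat \<Rightarrow> int \<Rightarrow> 'k::field" where
  "omat_one = (\<lambda>r c k. if r = c \<and> k = 0 then 1 else 0)"

definition omat_apply :: "('k::field \<Rightarrow> 'k) \<Rightarrow> nat \<Rightarrow> (nat \<Rightarrow> nat \<Rightarrow> int \<Rightarrow> 'k) \<Rightarrow> (nat \<Rightarrow> 'k) \<Rightarrow> (nat \<Rightarrow> 'k)" where
  "omat_apply \<sigma> n M y = (\<lambda>r. \<Sum>c<n. op_apply \<sigma> (M r c) (y c))"

definition finite_omat :: "nat \<Rightarrow> (nat \<Rightarrow> nat \<Rightarrow> int \<Rightarrow> 'k::field) \<Rightarrow> bool" where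
  "finite_omat n M \<longleftrightarrow> (\<forall>r<n. \<forall>c<n. finite {k. M r c k \<noteq> 0})"

definition unimodular :: "('k::field \<Rightarrow> 'k) \<Rightarrow> nat \<Rightarrow> (nat \<Rightarrow> nat \<Rightarrow> int \<Rightarrow> 'k) \<Rightarrow> bool" where
  "unimodular \<sigma> n P \<longleftrightarrow> finite_omat n P \<and>
     (\<exists>Q. finite_omat n Q \<and> (\<forall>r<n. \<forall>c<n. omat_mult \<sigma> n P Q r c = omat_one r c
                                             \<and> omat_mult \<sigma> n Q P r c = omat_one r c))"

definition poly_omat :: "nat \<Rightarrow> (nat \<Rightarrow> nat \<Rightarrow> nat \<Rightarrow> 'a::idom) \<Rightarrow> (nat \<Rightarrow> nat \<Rightarrow> int \<Rightarrow> 'a fract)" where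
  "poly_omat l C = (\<lambda>r c k. if 0 \<le> k \<and> k \<le> int l then pf (C (nat k) r c) else 0)"

definition pmat :: "nat \<Rightarrow> (nat \<Rightarrow> nat \<Rightarrow> 'a) \<Rightarrow> 'a mat" where
  "pmat n M = mat n n (\<lambda>(r, c). M r c)"

definition common_denom :: "nat \<Rightarrow> 'a::idom fract mat \<Rightarrow> 'a \<Rightarrow> bool" where
  "common_denom n M m \<longleftrightarrow> m \<noteq> 0 \<and> (\<forall>r<n. \<forall>c<n. \<exists>q. pf m * M $$ (r, c) = pf q)"

definition the_common_denom :: "nat \<Rightarrow> 'a::idom fract mat \<Rightarrow> 'a \<Rightarrow> bool" where
  "the_common_denom n M m \<longleftrightarrow> common_denom n M m \<and> (\<forall>m'. common_denom n M m' \<longrightarrow> m dvd m')"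

end

theory Submission imports Defs begin

lemma pf_add[simp]: "pf (a + b) = pf a + pf b" by (simp add: pf_def)
lemma pf_mult[simp]: "pf (a * b) = pf a * pf b" by (simp add: pf_def)
lemma pf_0[simp]: "pf 0 = 0" by (simp add: pf_def Zero_fract_def)
lemma pf_1[simp]: "pf 1 = 1" by (simp add: pf_def One_fract_def)
lemma pf_inj[simp]: "pf a = pf b \<longleftrightarrow> a = b" by (simp add: pf_def eq_fract)

interpretation pf: inj_comm_ring_hom "pf :: 'a::idom \<Rightarrow> 'a fract"
  by unfold_locales (auto, metis pf_0 pf_inj)

lemma pf_div: "b \<noteq> 0 \<Longrightarrow> pf a / pf b = Fract a b" by (simp add: pf_def)

lemma pCons_split: "pCons a p = [:a:] + [:0,1:] * (p::'a::comm_ring_1 poly)"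
  by (simp add: poly_eq_iff coeff_pCons split: nat.split)

lemma pf_const_inverse: "(c::'a::field) \<noteq> 0 \<Longrightarrow> inverse (pf [:c:]) = pf [:inverse c:]"
  by (simp add: pf_def eq_fract)

locale PS =
  fixes \<sigma> :: "'a::{field_gcd,field_char_0} poly fract \<Rightarrow> 'a poly fract"
  assumes ext: "PiSigma_ext \<sigma>"
begin

lemma aut: "is_field_aut \<sigma>" using ext by (simp add: PiSigma_ext_def)
lemma s_add: "\<sigma> (x+y) = \<sigma> x + \<sigma> y" using aut by (simp add: is_field_aut_def)
lemma s_mult: "\<sigma> (x*y) = \<sigma> x * \<sigma> y" using aut by (simp add: is_field_aut_def)
lemma s_bij: "bij \<sigma>" using aut by (simp add: is_field_aut_def)
lemma s_0: "\<sigma> 0 = 0"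
  using s_add[of 0 0] by (metis add_cancel_left_right add_0)
lemma s_1: "\<sigma> 1 = 1"
proof -
  obtain x where x: "\<sigma> x = 1" using s_bij by (metis bij_pointE)
  have "\<sigma> 1 * \<sigma> x = \<sigma> x" using s_mult[of 1 x] by simp
  thus ?thesis using x by simp
qed

sublocale s: field_isom \<sigma>
  by unfold_locales (auto simp: s_add s_mult s_0 s_1 bij_is_surj[OF s_bij])

declare s.f_eq_iff[simp del] s.inv_f_eq_iff[simp del]

lemma inv_s_s[simp]: "inv_into UNIV \<sigma> (\<sigma> x) = x" using s_bij by (simp add: bij_is_inj)
lemma s_inv_s[simp]: "\<sigma> (inv_into UNIV \<sigma> x) = x" using s_bij by (simp add: bij_is_surj surj_f_inv_f)

lemma sp_zero[simp]: "sigma_pow \<sigma> 0 x = x" by (simp add: sigma_pow_def)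

lemma sp_succ: "sigma_pow \<sigma> (k+1) x = \<sigma> (sigma_pow \<sigma> k x)"
proof (cases "k \<ge> 0")
  case True
  then have "nat (k+1) = Suc (nat k)" by simp
  then show ?thesis using True by (simp add: sigma_pow_def)
next
  case False
  define m where "m = nat (-k) - 1"
  have nk: "nat (-k) = Suc m" using False by (simp add: m_def)
  have k1: "sigma_pow \<sigma> (k+1) x = (inv_into UNIV \<sigma> ^^ m) x"
  proof (cases "m = 0")
    case True then have "k + 1 = 0" using nk False by simp
    then show ?thesis using True by simp
  next
    case f: False then have "\<not> 0 \<le> k+1" "nat (-(k+1)) = m" using nk False by auto
    then show ?thesis by (simp add: sigma_pow_def)
  qed
  have "sigma_pow \<sigma> k x = inv_into UNIV \<sigma> ((inv_into UNIV \<sigma> ^^ m) x)"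
    using False nk by (simp add: sigma_pow_def)
  then show ?thesis using k1 by simp
qed

lemma sp_pred: "sigma_pow \<sigma> (k-1) x = inv_into UNIV \<sigma> (sigma_pow \<sigma> k x)"
  using sp_succ[of "k-1" x] by simp


lemma sp_add: "sigma_pow \<sigma> a (sigma_pow \<sigma> b x) = sigma_pow \<sigma> (a+b) x"
proof (induct a rule: int_induct[where k=0])
  case base then show ?case by simp
next
  case (step1 i) then show ?case using sp_succ by (metis add.commute add.left_commute)
next
  case (step2 i) then show ?case using sp_pred by (metis add_diff_eq diff_add_eq)
qed

lemma sp_hom: "sigma_pow \<sigma> k (x + y) = sigma_pow \<sigma> k x + sigma_pow \<sigma> k y
   \<and> sigma_pow \<sigma> k (x * y) = sigma_pow \<sigma> k x * sigma_pow \<sigma> k y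
   \<and> sigma_pow \<sigma> k 1 = 1 \<and> sigma_pow \<sigma> k 0 = 0"
proof (induct k rule: int_induct[where k=0])
  case base then show ?case by simp
next
  case (step1 i) then show ?case by (simp add: sp_succ s.hom_add s.hom_mult)
next
  case (step2 i) then show ?case by (simp add: sp_pred s.inv.hom_add s.inv.hom_mult)
qed

lemma sp_field_hom: "field_hom (sigma_pow \<sigma> k)"
  by unfold_locales (simp_all add: sp_hom)


lemma s_constF: "\<sigma> ` constF = constF" using ext by (simp add: PiSigma_ext_def)
lemma constF_pf: "x \<in> constF \<Longrightarrow> x \<in> range pf" unfolding constF_def by auto
lemma inv_constF: "x \<in> constF \<Longrightarrow> inv_into UNIV \<sigma> x \<in> constF"
proof -
  assume "x \<in> constF"
  then have "x \<in> \<sigma> ` constF" using s_constF by simp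
  then obtain y where "y \<in> constF" "x = \<sigma> y" by auto
  then show ?thesis by simp
qed
lemma s_constF': "x \<in> constF \<Longrightarrow> \<sigma> x \<in> constF" using s_constF by auto

lemma pf_const_in: "pf [:c:] \<in> constF" unfolding constF_def by auto

lemma hom_pres_poly:
  assumes h: "comm_ring_hom f" and c: "\<And>c. f (pf [:c:]) \<in> range pf" and t: "f Tvar \<in> range pf"
  shows "f (pf p) \<in> range pf"
proof (induct p rule: pCons_induct)
  interpret h: comm_ring_hom f by (rule h)
  case 0
  then show ?case using h.hom_zero by (metis pf_0 rangeI)
next
  case (pCons a p)
  have e0: "pCons a p = [:a:] + [:0,1:] * p" by (rule pCons_split)
  have e: "pf (pCons a p) = pf [:a:] + Tvar * pf p" unfolding Tvar_def by (simp only: e0 pf_add pf_mult)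
  obtain u where u: "f (pf [:a:]) = pf u" using c by blast
  obtain v where v: "f Tvar = pf v" using t by blast
  obtain w where w: "f (pf p) = pf w" using pCons by blast
  interpret h: comm_ring_hom f by (rule h)
  have "f (pf (pCons a p)) = pf (u + v * w)"
    unfolding e h.hom_add h.hom_mult u v w by simp
  then show ?case by blast
qed

lemma s_Tvar: "\<sigma> Tvar \<in> range pf"
proof -
  have "Sigma_monomial \<sigma> \<or> Pi_monomial \<sigma>" using ext by (simp add: PiSigma_ext_def)
  then show ?thesis
  proof
    assume "Sigma_monomial \<sigma>"
    then obtain \<beta> where b: "\<sigma> Tvar = Tvar + pf [:\<beta>:]" by (auto simp: Sigma_monomial_def)
    have "Tvar + pf [:\<beta>:] = pf ([:0,1:] + [:\<beta>:])" unfolding Tvar_def by (rule pf_add[symmetric])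
    with b have "\<sigma> Tvar = pf ([:0,1:] + [:\<beta>:])" by simp
    then show ?thesis by blast
  next
    assume "Pi_monomial \<sigma>"
    then obtain \<alpha> where a: "\<sigma> Tvar = pf [:\<alpha>:] * Tvar" by (auto simp: Pi_monomial_def)
    have "pf [:\<alpha>:] * Tvar = pf ([:\<alpha>:] * [:0,1:])" unfolding Tvar_def by (rule pf_mult[symmetric])
    with a have "\<sigma> Tvar = pf ([:\<alpha>:] * [:0,1:])" by simp
    then show ?thesis by blast
  qed
qed

lemma inv_Tvar: "inv_into UNIV \<sigma> Tvar \<in> range pf"
proof -
  let ?i = "inv_into UNIV \<sigma>"
  have "Sigma_monomial \<sigma> \<or> Pi_monomial \<sigma>" using ext by (simp add: PiSigma_ext_def)
  then show ?thesis
  proof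
    assume "Sigma_monomial \<sigma>"
    then obtain \<beta> where b: "\<sigma> Tvar = Tvar + pf [:\<beta>:]" by (auto simp: Sigma_monomial_def)
    have "Tvar = ?i (Tvar + pf [:\<beta>:])" using b inv_s_s by metis
    also have "\<dots> = ?i Tvar + ?i (pf [:\<beta>:])" by (rule s.inv.hom_add)
    finally have "Tvar = ?i Tvar + ?i (pf [:\<beta>:])" .
    then have e: "?i Tvar = Tvar - ?i (pf [:\<beta>:])" by (simp add: algebra_simps)
    obtain q where q: "?i (pf [:\<beta>:]) = pf q" using constF_pf[OF inv_constF[OF pf_const_in]] by blast
    have "?i Tvar = pf ([:0,1:] - q)" unfolding e q by (simp add: Tvar_def pf.hom_minus)
    then show ?thesis by blast
  next
    assume "Pi_monomial \<sigma>"
    then obtain \<alpha> where a: "\<sigma> Tvar = pf [:\<alpha>:] * Tvar" by (auto simp: Pi_monomial_def)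
    have "Tvar = ?i (pf [:\<alpha>:] * Tvar)" using a inv_s_s by metis
    also have "\<dots> = ?i (pf [:\<alpha>:]) * ?i Tvar" by (rule s.inv.hom_mult)
    finally have e: "Tvar = ?i (pf [:\<alpha>:]) * ?i Tvar" .
    obtain c where c: "?i (pf [:\<alpha>:]) = pf [:c:]" using inv_constF[OF pf_const_in, of \<alpha>]
      unfolding constF_def by auto
    have c0: "c \<noteq> 0"
    proof
      assume "c = 0"
      then have "?i (pf [:\<alpha>:]) = 0" using c by simp
      then have "(Tvar :: 'a poly fract) = 0" using e by (metis mult_zero_left)
      moreover have "(Tvar :: 'a poly fract) \<noteq> pf 0" unfolding Tvar_def pf_inj by simp
      ultimately show False by simp
    qed
    have cz: "pf [:c:] \<noteq> 0" using c0 by simp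
    have e': "Tvar = pf [:c:] * ?i Tvar" using e c by simp
    have "?i Tvar = inverse (pf [:c:]) * Tvar"
      by (metis e' cz mult.assoc left_inverse mult_1_left)
    also have "\<dots> = pf [:inverse c:] * Tvar" using c0 by (simp add: pf_const_inverse)
    also have "\<dots> = pf ([:inverse c:] * [:0,1:])" unfolding Tvar_def by (rule pf_mult[symmetric])
    finally show ?thesis by blast
  qed
qed

lemma sp_poly: "sigma_pow \<sigma> k (pf p) \<in> range pf"
proof (induct k arbitrary: p rule: int_induct[where k=0])
  case base then show ?case by simp
next
  case (step1 i)
  obtain q where q: "sigma_pow \<sigma> i (pf p) = pf q" using step1 by blast
  have "\<sigma> (pf q) \<in> range pf"
    by (rule hom_pres_poly) (auto intro: s.comm_ring_hom_axioms s_Tvar constF_pf s_constF' pf_const_in)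
  then show ?case by (simp add: sp_succ q)
next
  case (step2 i)
  obtain q where q: "sigma_pow \<sigma> i (pf p) = pf q" using step2 by blast
  have "inv_into UNIV \<sigma> (pf q) \<in> range pf"
    by (rule hom_pres_poly) (auto intro: s.inv.comm_ring_hom_axioms inv_Tvar constF_pf inv_constF pf_const_in)
  then show ?case by (simp add: sp_pred q)
qed

lemma sig_pf: "pf (sig_poly \<sigma> k p) = sigma_pow \<sigma> k (pf p)"
proof -
  obtain q where q: "sigma_pow \<sigma> k (pf p) = pf q" using sp_poly by blast
  show ?thesis unfolding sig_poly_def q by simp
qed

lemma sp_fh: "sigma_pow \<sigma> k (x + y) = sigma_pow \<sigma> k x + sigma_pow \<sigma> k y"
   "sigma_pow \<sigma> k (x * y) = sigma_pow \<sigma> k x * sigma_pow \<sigma> k y"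
   "sigma_pow \<sigma> k 1 = 1" "sigma_pow \<sigma> k 0 = 0" using sp_hom by auto

lemma sig_add: "sig_poly \<sigma> k (a + b) = sig_poly \<sigma> k a + sig_poly \<sigma> k b"
  by (subst pf_inj[symmetric]) (simp add: sig_pf sp_fh)
lemma sig_mult: "sig_poly \<sigma> k (a * b) = sig_poly \<sigma> k a * sig_poly \<sigma> k b"
  by (subst pf_inj[symmetric]) (simp add: sig_pf sp_fh)
lemma sig_0: "sig_poly \<sigma> k 0 = 0"
  by (subst pf_inj[symmetric]) (simp add: sig_pf sp_fh)
lemma sig_1: "sig_poly \<sigma> k 1 = 1"
  by (subst pf_inj[symmetric]) (simp add: sig_pf sp_fh)
lemma sig_sig: "sig_poly \<sigma> a (sig_poly \<sigma> b p) = sig_poly \<sigma> (a+b) p"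
  by (subst pf_inj[symmetric]) (simp add: sig_pf sp_add)
lemma sig_zero_idx: "sig_poly \<sigma> 0 p = p"
  by (subst pf_inj[symmetric]) (simp add: sig_pf)

lemma sig_isom: "idom_isom (sig_poly \<sigma> k)"
proof unfold_locales
  fix x y show "sig_poly \<sigma> k (x + y) = sig_poly \<sigma> k x + sig_poly \<sigma> k y" by (rule sig_add)
next
  fix x y show "sig_poly \<sigma> k (x * y) = sig_poly \<sigma> k x * sig_poly \<sigma> k y" by (rule sig_mult)
next
  show "sig_poly \<sigma> k 0 = 0" by (rule sig_0)
next
  show "sig_poly \<sigma> k 1 = 1" by (rule sig_1)
next
  fix x assume "sig_poly \<sigma> k x = 0"
  then have "sig_poly \<sigma> (-k) (sig_poly \<sigma> k x) = 0" by (simp add: sig_0)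
  then show "x = 0" by (simp add: sig_sig sig_zero_idx)
next
  show "surj (sig_poly \<sigma> k)"
  proof (rule surjI)
    fix x show "sig_poly \<sigma> k (sig_poly \<sigma> (-k) x) = x" by (simp add: sig_sig sig_zero_idx)
  qed
qed


lemma sig_dvd: "sig_poly \<sigma> k a dvd sig_poly \<sigma> k b \<longleftrightarrow> a dvd b"
proof -
  interpret i: idom_isom "sig_poly \<sigma> k" by (rule sig_isom)
  show ?thesis by (rule i.hom_dvd_hom)
qed

lemma sig_inv1: "sig_poly \<sigma> k (sig_poly \<sigma> (-k) a) = a" by (simp add: sig_sig sig_zero_idx)
lemma sig_inv2: "sig_poly \<sigma> (-k) (sig_poly \<sigma> k a) = a" by (simp add: sig_sig sig_zero_idx)

lemma sig_eq0: "sig_poly \<sigma> k a = 0 \<longleftrightarrow> a = 0"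
  by (metis sig_0 sig_inv2)

lemma sig_unit: "is_unit (sig_poly \<sigma> k a) \<longleftrightarrow> is_unit a"
  using sig_dvd[of k a 1] by (simp add: sig_1)

lemma sig_dvd_iff2: "sig_poly \<sigma> k a dvd b \<longleftrightarrow> a dvd sig_poly \<sigma> (-k) b"
  using sig_dvd[of k a "sig_poly \<sigma> (-k) b"] by (simp add: sig_inv1)

lemma sig_prime: assumes "prime_elem f" shows "prime_elem (sig_poly \<sigma> k f)"
proof -
  have f0: "f \<noteq> 0" "\<not> is_unit f" using assms by (auto simp: prime_elem_def)
  show ?thesis unfolding prime_elem_def
  proof (intro conjI allI impI)
    show "sig_poly \<sigma> k f \<noteq> 0" using f0 by (simp add: sig_eq0)
    show "\<not> is_unit (sig_poly \<sigma> k f)" using f0 by (simp add: sig_unit)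
  next
    fix a b assume "sig_poly \<sigma> k f dvd a * b"
    then have "f dvd sig_poly \<sigma> (-k) a * sig_poly \<sigma> (-k) b"
      by (simp add: sig_dvd_iff2 sig_mult)
    then have "f dvd sig_poly \<sigma> (-k) a \<or> f dvd sig_poly \<sigma> (-k) b"
      using assms by (simp add: prime_elem_dvd_mult_iff)
    then show "sig_poly \<sigma> k f dvd a \<or> sig_poly \<sigma> k f dvd b" by (simp add: sig_dvd_iff2)
  qed
qed

lemma sig_prod: "sig_poly \<sigma> k (prod f A) = (\<Prod>x\<in>A. sig_poly \<sigma> k (f x))"
proof -
  interpret i: idom_isom "sig_poly \<sigma> k" by (rule sig_isom)
  show ?thesis by (rule i.hom_prod)
qed

lemma sp_one: "sigma_pow \<sigma> 1 x = \<sigma> x" by (simp add: sigma_pow_def)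

lemma sig_const: "\<exists>c'. sig_poly \<sigma> k [:c:] = [:c':]"
proof -
  have "sigma_pow \<sigma> k (pf [:c:]) \<in> constF"
  proof (induct k rule: int_induct[where k=0])
    case base then show ?case by (simp add: pf_const_in)
  next
    case (step1 i) then show ?case by (simp add: sp_succ s_constF')
  next
    case (step2 i) then show ?case by (simp add: sp_pred inv_constF)
  qed
  then obtain c' where "sigma_pow \<sigma> k (pf [:c:]) = pf [:c':]" unfolding constF_def by auto
  then have "pf (sig_poly \<sigma> k [:c:]) = pf [:c':]" by (simp add: sig_pf)
  then show ?thesis by auto
qed

lemma not_both: "\<not> (Sigma_monomial \<sigma> \<and> Pi_monomial \<sigma>)"
proof
  assume "Sigma_monomial \<sigma> \<and> Pi_monomial \<sigma>"
  then obtain \<alpha> \<beta> where b: "\<beta> \<noteq> 0" "\<sigma> Tvar = Tvar + pf [:\<beta>:]" and a: "\<sigma> Tvar = pf [:\<alpha>:] * Tvar"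
    by (auto simp: Sigma_monomial_def Pi_monomial_def)
  have e1: "Tvar + pf [:\<beta>:] = pf ([:0,1:] + [:\<beta>:])" unfolding Tvar_def by (rule pf_add[symmetric])
  have e2: "pf [:\<alpha>:] * Tvar = pf ([:\<alpha>:] * [:0,1:])" unfolding Tvar_def by (rule pf_mult[symmetric])
  have "pf ([:0,1:] + [:\<beta>:]) = pf ([:\<alpha>:] * [:0,1:])" using a b e1 e2 by simp
  then have "[:0,1:] + [:\<beta>:] = [:\<alpha>:] * [:0,1:]" by (simp only: pf_inj)
  then have "coeff ([:0,1:] + [:\<beta>:]) 0 = coeff ([:\<alpha>:] * [:0,1:]) 0" by simp
  then show False using b by simp
qed

definition T1 :: "'a poly" where "T1 = sig_poly \<sigma> 1 [:0,1:]"

lemma T1_cases: "(Sigma_monomial \<sigma> \<and> (\<exists>\<beta>. T1 = [:\<beta>,1:])) \<or> (Pi_monomial \<sigma> \<and> (\<exists>\<alpha>. \<alpha> \<noteq> 0 \<and> T1 = [:0,\<alpha>:]))"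
proof -
  have pT: "pf T1 = \<sigma> Tvar" unfolding T1_def by (simp add: sig_pf sp_one Tvar_def)
  have "Sigma_monomial \<sigma> \<or> Pi_monomial \<sigma>" using ext by (simp add: PiSigma_ext_def)
  then show ?thesis
  proof
    assume S: "Sigma_monomial \<sigma>"
    then obtain \<beta> where b: "\<sigma> Tvar = Tvar + pf [:\<beta>:]" by (auto simp: Sigma_monomial_def)
    have "Tvar + pf [:\<beta>:] = pf ([:0,1:] + [:\<beta>:])" unfolding Tvar_def by (rule pf_add[symmetric])
    then have "T1 = [:0,1:] + [:\<beta>:]" using pT b by simp
    then have "T1 = [:\<beta>,1:]" by simp
    then show ?thesis using S by blast
  next
    assume P: "Pi_monomial \<sigma>"
    then obtain \<alpha> where a: "\<alpha> \<noteq> 0" "\<sigma> Tvar = pf [:\<alpha>:] * Tvar" by (auto simp: Pi_monomial_def)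
    have "pf [:\<alpha>:] * Tvar = pf ([:\<alpha>:] * [:0,1:])" unfolding Tvar_def by (rule pf_mult[symmetric])
    then have "T1 = [:\<alpha>:] * [:0,1:]" using pT a by simp
    then have "T1 = [:0,\<alpha>:]" by simp
    then show ?thesis using P a by blast
  qed
qed

lemma T1_deg: "degree T1 = 1" using T1_cases by auto
lemma T1_nz: "T1 \<noteq> 0" using T1_deg by auto

lemma sig1_split: "sig_poly \<sigma> 1 (pCons a p) = sig_poly \<sigma> 1 [:a:] + T1 * sig_poly \<sigma> 1 p"
proof -
  have "pCons a p = [:a:] + [:0,1:] * p" by (rule pCons_split)
  then have "sig_poly \<sigma> 1 (pCons a p) = sig_poly \<sigma> 1 ([:a:] + [:0,1:] * p)" by (rule arg_cong)
  also have "\<dots> = sig_poly \<sigma> 1 [:a:] + T1 * sig_poly \<sigma> 1 p" by (simp only: sig_add sig_mult T1_def)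
  finally show ?thesis .
qed

lemma sig1_lead: "p \<noteq> 0 \<Longrightarrow> degree (sig_poly \<sigma> 1 p) = degree p \<and>
   lead_coeff (sig_poly \<sigma> 1 p) = lead_coeff (sig_poly \<sigma> 1 [:lead_coeff p:]) * lead_coeff T1 ^ degree p"
proof (induct p rule: pCons_induct)
  case 0 then show ?case by simp
next
  case (pCons a p)
  obtain c where c: "sig_poly \<sigma> 1 [:a:] = [:c:]" using sig_const by blast
  show ?case
  proof (cases "p = 0")
    case True
    then show ?thesis using c by simp
  next
    case False
    let ?q = "sig_poly \<sigma> 1 p"
    have q0: "?q \<noteq> 0" using False by (simp add: sig_eq0)
    have dTq: "degree (T1 * ?q) = Suc (degree p)" using pCons(2) False q0 T1_nz T1_deg
      by (simp add: degree_mult_eq)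
    have e: "sig_poly \<sigma> 1 (pCons a p) = [:c:] + T1 * ?q" unfolding sig1_split[of a p] c ..
    have d: "degree ([:c:] + T1 * ?q) = degree (T1 * ?q)"
      using dTq by (simp add: degree_add_eq_right)
    have l: "lead_coeff ([:c:] + T1 * ?q) = lead_coeff (T1 * ?q)"
      unfolding d dTq by simp
    have lm: "lead_coeff (T1 * ?q) = lead_coeff T1 * lead_coeff ?q" by (rule lead_coeff_mult)
    have IH: "degree ?q = degree p" "lead_coeff ?q = lead_coeff (sig_poly \<sigma> 1 [:lead_coeff p:]) * lead_coeff T1 ^ degree p"
      using pCons(2) False by auto
    have "lead_coeff (sig_poly \<sigma> 1 (pCons a p)) = lead_coeff T1 * lead_coeff ?q"
      unfolding e l lm ..
    also have "\<dots> = lead_coeff (sig_poly \<sigma> 1 [:lead_coeff (pCons a p):]) * lead_coeff T1 ^ degree (pCons a p)"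
    proof -
      have "lead_coeff (pCons a p) = lead_coeff p" "degree (pCons a p) = Suc (degree p)" using False by auto
      then show ?thesis by (simp only: IH(2) power_Suc mult_ac)
    qed
    finally show ?thesis using e d dTq False by simp
  qed
qed


lemma fixed_const: "\<sigma> x = x \<Longrightarrow> x \<in> constF"
  using ext unfolding PiSigma_ext_def by blast

lemma const_pow: "[:c:] ^ m = [:(c::'b::comm_ring_1) ^ m:]"
  by (induct m) (auto simp: mult.commute)

lemma karr:
  assumes h0: "h \<noteq> 0" and hd: "degree h \<noteq> 0" and hs: "sig_poly \<sigma> 1 h = Polynomial.smult u h"
  shows "Pi_monomial \<sigma> \<and> (\<exists>c. h = Polynomial.smult c ([:0,1:] ^ degree h))"
proof -
  define L where "L = lead_coeff h"
  have L0: "L \<noteq> 0" using h0 by (simp add: L_def)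
  define g where "g = Polynomial.smult (inverse L) h"
  have hg: "h = Polynomial.smult L g" using L0 by (simp add: g_def)
  have g0: "g \<noteq> 0" using h0 L0 by (simp add: g_def)
  have dg: "degree g = degree h" using L0 by (simp add: g_def)
  have lg: "lead_coeff g = 1" using L0 by (simp add: g_def L_def)
  obtain c1 where c1: "sig_poly \<sigma> 1 [:inverse L:] = [:c1:]" using sig_const by blast
  define w where "w = c1 * u * L"
  have "sig_poly \<sigma> 1 g = sig_poly \<sigma> 1 ([:inverse L:] * h)" by (simp add: g_def)
  also have "\<dots> = [:c1:] * Polynomial.smult u h" by (simp only: sig_mult c1 hs)
  also have "\<dots> = Polynomial.smult w g" by (simp add: hg w_def mult_ac)
  finally have sg: "sig_poly \<sigma> 1 g = Polynomial.smult w g" .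
  have "lead_coeff (sig_poly \<sigma> 1 g) = lead_coeff (sig_poly \<sigma> 1 [:1:]) * lead_coeff T1 ^ degree g"
    using conjunct2[OF sig1_lead[OF g0]] unfolding lg .
  also have "sig_poly \<sigma> 1 [:1:] = 1" using sig_1 by (simp add: one_pCons)
  finally have wv: "w = lead_coeff T1 ^ degree h" using sg lg dg T1_nz by (cases "w = 0") auto
  have pg: "\<sigma> (pf g) = pf [:w:] * pf g"
  proof -
    have "\<sigma> (pf g) = pf (sig_poly \<sigma> 1 g)" by (simp add: sig_pf sp_one)
    also have "\<dots> = pf ([:w:] * g)" by (simp add: sg)
    finally show ?thesis by (simp only: pf_mult)
  qed
  from T1_cases show ?thesis
  proof
    assume "Sigma_monomial \<sigma> \<and> (\<exists>\<beta>. T1 = [:\<beta>,1:])"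
    then obtain \<beta> where "T1 = [:\<beta>,1:]" by blast
    then have "w = 1" using wv by simp
    then have "\<sigma> (pf g) = pf g" using pg by simp
    then have "pf g \<in> constF" by (rule fixed_const)
    then obtain c where "pf g = pf [:c:]" unfolding constF_def by auto
    then have "g = [:c:]" by simp
    then show ?thesis using dg hd by simp
  next
    assume P: "Pi_monomial \<sigma> \<and> (\<exists>\<alpha>. \<alpha> \<noteq> 0 \<and> T1 = [:0,\<alpha>:])"
    then obtain \<alpha> where a0: "\<alpha> \<noteq> 0" and aT: "T1 = [:0,\<alpha>:]" by blast
    let ?m = "degree h"
    have ww: "w = \<alpha> ^ ?m" using wv aT by simp
    have tv0: "(Tvar :: 'a poly fract) \<noteq> 0"
    proof -
      have "(Tvar :: 'a poly fract) \<noteq> pf 0" unfolding Tvar_def pf_inj by simp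
      then show ?thesis by simp
    qed
    have sT: "\<sigma> Tvar = pf [:\<alpha>:] * Tvar"
    proof -
      have "\<sigma> Tvar = pf T1" unfolding T1_def Tvar_def by (simp add: sig_pf sp_one)
      also have "\<dots> = pf ([:\<alpha>:] * [:0,1:])" using aT by simp
      also have "\<dots> = pf [:\<alpha>:] * Tvar" unfolding Tvar_def by (rule pf_mult)
      finally show ?thesis .
    qed
    have apow: "pf [:\<alpha>:] ^ ?m = pf [:w:]"
      unfolding ww pf.hom_power[symmetric] const_pow ..
    have aw0: "pf [:w:] \<noteq> 0" using a0 ww by simp
    define x where "x = pf g / Tvar ^ ?m"
    have "\<sigma> x = \<sigma> (pf g) / \<sigma> Tvar ^ ?m"
      unfolding x_def by (simp add: s.hom_div s.hom_power)
    also have "\<dots> = (pf [:w:] * pf g) / (pf [:w:] * Tvar ^ ?m)"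
      unfolding pg sT power_mult_distrib apow ..
    also have "\<dots> = x" unfolding x_def using aw0 tv0 by simp
    finally have "x \<in> constF" by (rule fixed_const)
    then obtain c where "x = pf [:c:]" unfolding constF_def by auto
    then have "pf g = pf [:c:] * Tvar ^ ?m" unfolding x_def using tv0 by (simp add: field_simps)
    also have "\<dots> = pf ([:c:] * [:0,1:] ^ ?m)" unfolding Tvar_def by (simp only: pf_mult pf.hom_power)
    finally have "g = [:c:] * [:0,1:] ^ ?m" by (simp only: pf_inj)
    then have "g = Polynomial.smult c ([:0,1:] ^ ?m)" by simp
    then have "h = Polynomial.smult (L * c) ([:0,1:] ^ ?m)" using hg by (metis smult_smult)
    then show ?thesis using P by blast
  qed
qed


definition NT :: "'a poly \<Rightarrow> bool" where
  "NT f \<longleftrightarrow> (Pi_monomial \<sigma> \<longrightarrow> \<not> f dvd [:0,1:])"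

lemma pe_dvd_prod: assumes "prime_elem p" "finite A" "p dvd prod g A" shows "\<exists>x\<in>A. p dvd g x"
  using assms(2,3)
proof (induct A rule: finite_induct)
  case empty then show ?case using assms(1) by (simp add: prime_elem_def)
next
  case (insert x F)
  then have "p dvd g x * prod g F" by simp
  then have "p dvd g x \<or> p dvd prod g F" using assms(1) by (simp add: prime_elem_dvd_mult_iff)
  then show ?case using insert by auto
qed

lemma aper_pos:
  assumes pf: "prime_elem f" and nt: "NT f" and n0: "n > 0"
    and d1: "sig_poly \<sigma> (int n) f dvd f" and d2: "f dvd sig_poly \<sigma> (int n) f"
  shows False
proof -
  have f0: "f \<noteq> 0" and fu: "\<not> is_unit f" using pf by (auto simp: prime_elem_def)
  obtain r where r: "sig_poly \<sigma> (int n) f = f * r" using d2 by (auto elim: dvdE)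
  have "f * r dvd f * 1" using d1 r by simp
  then have "is_unit r" using f0 by simp
  then obtain u where u: "r = [:u:]" using is_unit_poly_iff by blast
  have sn: "sig_poly \<sigma> (int n) f = Polynomial.smult u f" using r u by simp
  define h where "h = (\<Prod>i<n. sig_poly \<sigma> (int i) f)"
  have s1h: "sig_poly \<sigma> 1 h = (\<Prod>i<n. sig_poly \<sigma> (int (Suc i)) f)"
    unfolding h_def sig_prod sig_sig by (simp add: add.commute)
  have "(\<Prod>i<Suc n. sig_poly \<sigma> (int i) f) = sig_poly \<sigma> (int 0) f * (\<Prod>i<n. sig_poly \<sigma> (int (Suc i)) f)"
    by (rule prod.lessThan_Suc_shift)
  then have "h * sig_poly \<sigma> (int n) f = f * sig_poly \<sigma> 1 h"
    unfolding s1h by (simp add: h_def sig_zero_idx)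
  then have "f * sig_poly \<sigma> 1 h = f * Polynomial.smult u h" using sn by (simp add: mult_ac)
  then have hs: "sig_poly \<sigma> 1 h = Polynomial.smult u h" using f0 by (metis mult_cancel_left)
  have h0: "h \<noteq> 0" unfolding h_def using f0 by (simp add: sig_eq0)
  have "sig_poly \<sigma> (int 0) f dvd h" unfolding h_def by (rule dvd_prodI) (use n0 in auto)
  then have fh: "f dvd h" by (simp add: sig_zero_idx)
  have "degree f \<noteq> 0" using f0 fu is_unit_iff_degree by blast
  moreover have "degree f \<le> degree h" using fh h0 by (rule dvd_imp_degree_le)
  ultimately have hd: "degree h \<noteq> 0" by simp
  from karr[OF h0 hd hs] obtain c where P: "Pi_monomial \<sigma>" and hc: "h = Polynomial.smult c ([:0,1:] ^ degree h)" by blast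
  obtain m where hm: "h = Polynomial.smult c ([:0,1:] ^ m)" using hc by blast
  have c0: "c \<noteq> 0" using h0 hm by (metis smult_0_left)
  have "f dvd [:0,1:] ^ m"
    using dvd_smult_cancel[OF fh[unfolded hm] c0] .
  then have "f dvd [:0,1:]" using pf prime_elem_dvd_power by blast
  then show False using nt P by (simp add: NT_def)
qed

lemma aperiodic:
  assumes pf: "prime_elem f" and nt: "NT f" and j0: "j \<noteq> 0"
    and d1: "sig_poly \<sigma> j f dvd f" and d2: "f dvd sig_poly \<sigma> j f"
  shows False
proof (cases "j > 0")
  case True
  then obtain n where "j = int n" "n > 0" by (metis pos_int_cases)
  then show False using aper_pos[OF pf nt] d1 d2 by blast
next
  case False
  then obtain n where n: "j = - int n" "n > 0" using j0 by (metis neg_int_cases not_less_iff_gr_or_eq)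
  have e1: "sig_poly \<sigma> (int n) f dvd f"
    using d2 sig_dvd[of "int n" f "sig_poly \<sigma> j f"] n by (simp add: sig_sig sig_zero_idx)
  have e2: "f dvd sig_poly \<sigma> (int n) f"
    using d1 sig_dvd[of "int n" "sig_poly \<sigma> j f" f] n by (simp add: sig_sig sig_zero_idx)
  show False using aper_pos[OF pf nt n(2) e1 e2] .
qed

lemma t_assoc: "Pi_monomial \<sigma> \<Longrightarrow> [:0,1:] dvd sig_poly \<sigma> k [:0,1:] \<and> sig_poly \<sigma> k [:0,1:] dvd [:0,1:]"
proof -
  assume P: "Pi_monomial \<sigma>"
  then obtain \<alpha> where a0: "\<alpha> \<noteq> 0" and aT: "T1 = [:0,\<alpha>:]" using T1_cases not_both by blast
  have t1: "[:0,1:] dvd sig_poly \<sigma> 1 [:0,1:]" unfolding T1_def[symmetric] aT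
    by (rule dvdI[of _ _ "[:\<alpha>:]"]) simp
  have t2: "sig_poly \<sigma> 1 [:0,1:] dvd [:0,1:]" unfolding T1_def[symmetric] aT
    by (rule dvdI[of _ _ "[:inverse \<alpha>:]"]) (simp add: a0)
  show ?thesis
  proof (induct k rule: int_induct[where k=0])
    case base then show ?case by (simp add: sig_zero_idx)
  next
    case (step1 i)
    have e: "sig_poly \<sigma> (i+1) [:0,1:] = sig_poly \<sigma> 1 (sig_poly \<sigma> i [:0,1:])" by (simp add: sig_sig add.commute)
    show ?case unfolding e using step1 t1 t2 sig_dvd[of 1] by (meson dvd_trans)
  next
    case (step2 i)
    have e: "sig_poly \<sigma> (i - 1) [:0,1:] = sig_poly \<sigma> (-1) (sig_poly \<sigma> i [:0,1:])" by (simp add: sig_sig)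
    have a: "[:0,1:] dvd sig_poly \<sigma> (-1) (sig_poly \<sigma> i [:0,1:])"
      using sig_dvd[of 1 "[:0,1:]" "sig_poly \<sigma> (-1) (sig_poly \<sigma> i [:0,1:])"] step2 t2
      by (simp add: sig_inv1) (meson dvd_trans)
    have b: "sig_poly \<sigma> (-1) (sig_poly \<sigma> i [:0,1:]) dvd [:0,1:]"
      using sig_dvd[of 1 "sig_poly \<sigma> (-1) (sig_poly \<sigma> i [:0,1:])" "[:0,1:]"] step2 t1
      by (simp add: sig_inv1) (meson dvd_trans)
    show ?case unfolding e using a b by blast
  qed
qed

lemma NT_sig: "NT f \<Longrightarrow> NT (sig_poly \<sigma> k f)"
  unfolding NT_def
proof (intro impI notI)
  assume nt: "Pi_monomial \<sigma> \<longrightarrow> \<not> f dvd [:0, 1:]" and P: "Pi_monomial \<sigma>"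
    and d: "sig_poly \<sigma> k f dvd [:0, 1:]"
  have "f dvd sig_poly \<sigma> (-k) [:0,1:]" using d by (simp add: sig_dvd_iff2)
  then have "f dvd [:0,1:]" using t_assoc[OF P, of "-k"] dvd_trans by blast
  then show False using nt P by simp
qed

lemma S_finite:
  assumes d0: "d \<noteq> 0" and pf: "prime_elem f" and nt: "NT f"
  shows "finite {j. sig_poly \<sigma> j f dvd d}"
proof -
  let ?S = "{j. sig_poly \<sigma> j f dvd d}"
  let ?g = "\<lambda>j. normalize (sig_poly \<sigma> j f)"
  have "?g ` ?S \<subseteq> prime_factors d"
    using d0 sig_prime[OF pf] by (auto simp: in_prime_factors_iff)
  then have fin: "finite (?g ` ?S)" by (rule finite_subset) simp
  have "inj_on ?g ?S"
  proof (rule inj_onI)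
    fix i j assume "i \<in> ?S" "j \<in> ?S" and e: "?g i = ?g j"
    then have a: "sig_poly \<sigma> i f dvd sig_poly \<sigma> j f" "sig_poly \<sigma> j f dvd sig_poly \<sigma> i f"
      by (auto simp: associated_iff_dvd)
    have "sig_poly \<sigma> (i - j) f dvd f" "f dvd sig_poly \<sigma> (i - j) f"
      using a sig_dvd[of "-j" "sig_poly \<sigma> i f" "sig_poly \<sigma> j f"] sig_dvd[of "-j" "sig_poly \<sigma> j f" "sig_poly \<sigma> i f"]
      by (simp_all add: sig_sig sig_zero_idx)
    then show "i = j" using aperiodic[OF pf nt, of "i - j"] by auto
  qed
  then show ?thesis using fin finite_imageD by blast
qed


lemma core:
  assumes d0: "d \<noteq> 0" and pf: "prime_elem f" and nt: "NT f" and fd: "f dvd d"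
    and k0: "0 \<le> k0" and fk: "sig_poly \<sigma> k0 f dvd d"
  shows "\<exists>f' K. prime_elem f' \<and> NT f' \<and> k0 \<le> K \<and> f' dvd d \<and> sig_poly \<sigma> K f' dvd d
     \<and> (\<forall>j. sig_poly \<sigma> j f' dvd d \<longrightarrow> 0 \<le> j \<and> j \<le> K)"
proof -
  define S where "S = {j. sig_poly \<sigma> j f dvd d}"
  have fin: "finite S" unfolding S_def by (rule S_finite[OF d0 pf nt])
  have s0: "0 \<in> S" using fd by (simp add: S_def sig_zero_idx)
  have sk: "k0 \<in> S" using fk by (simp add: S_def)
  define j0 where "j0 = Min S"
  define j1 where "j1 = Max S"
  have j0S: "j0 \<in> S" and j1S: "j1 \<in> S" using fin s0 unfolding j0_def j1_def by (auto intro: Min_in Max_in)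
  have j0le: "\<And>j. j \<in> S \<Longrightarrow> j0 \<le> j" and j1ge: "\<And>j. j \<in> S \<Longrightarrow> j \<le> j1"
    using fin by (auto simp: j0_def j1_def)
  define f' where "f' = sig_poly \<sigma> j0 f"
  define K where "K = j1 - j0"
  have sf: "\<And>j. sig_poly \<sigma> j f' = sig_poly \<sigma> (j + j0) f" by (simp add: f'_def sig_sig)
  show ?thesis
  proof (intro exI conjI allI impI)
    show "prime_elem f'" unfolding f'_def by (rule sig_prime[OF pf])
    show "NT f'" unfolding f'_def by (rule NT_sig[OF nt])
    show "k0 \<le> K" using j0le[OF s0] j1ge[OF sk] by (simp add: K_def)
    show "f' dvd d" using j0S by (simp add: f'_def S_def)
    show "sig_poly \<sigma> K f' dvd d" using j1S by (simp add: sf K_def S_def)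
  next
    fix j assume "sig_poly \<sigma> j f' dvd d"
    then have "j + j0 \<in> S" by (simp add: sf S_def)
    then show "0 \<le> j" "j \<le> K" using j0le[of "j + j0"] j1ge[of "j + j0"] by (auto simp: K_def)
  qed
qed

lemma red_exists:
  fixes d q :: "'a poly"
  assumes red: "Gcd (insert d (z ` {..<n})) = 1" and pq: "prime_elem q" and qd: "q dvd d"
  shows "\<exists>c<n. \<not> q dvd z c"
proof (rule ccontr)
  assume "\<not> ?thesis"
  then have "\<forall>y\<in>insert d (z ` {..<n}). q dvd y" using qd by blast
  then have "q dvd Gcd (insert d (z ` {..<n}))" by (intro Gcd_greatest) blast
  then have "q dvd 1" by (simp only: red)
  then show False using pq by (simp add: prime_elem_def)
qed

lemma div_m:
  assumes pf: "prime_elem f'" and ex: "\<forall>j. sig_poly \<sigma> j f' dvd d \<longrightarrow> 0 \<le> j \<and> j \<le> K"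
    and fK: "sig_poly \<sigma> K f' dvd d" and red: "Gcd (insert d (z ` {..<n})) = 1"
    and hm: "\<forall>c<n. m * (\<Prod>i<l. sig_poly \<sigma> (int i) d) * sig_poly \<sigma> (int l) (z c) = w c * sig_poly \<sigma> (int l) d"
  shows "sig_poly \<sigma> (K + int l) f' dvd m"
proof -
  let ?q = "sig_poly \<sigma> K f'"
  have pq: "prime_elem ?q" by (rule sig_prime[OF pf])
  obtain c where c: "c < n" "\<not> ?q dvd z c" using red_exists[OF red pq fK] by blast
  let ?g = "sig_poly \<sigma> (int l) ?q"
  have ge: "?g = sig_poly \<sigma> (K + int l) f'" by (simp add: sig_sig add.commute)
  have pg: "prime_elem ?g" by (rule sig_prime[OF pq])
  have g1: "?g dvd sig_poly \<sigma> (int l) d" using fK by (simp add: sig_dvd)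
  have g2: "\<not> ?g dvd sig_poly \<sigma> (int l) (z c)" using c by (simp add: sig_dvd)
  have g3: "\<not> ?g dvd (\<Prod>i<l. sig_poly \<sigma> (int i) d)"
  proof
    assume "?g dvd (\<Prod>i<l. sig_poly \<sigma> (int i) d)"
    then obtain i where i: "i < l" "?g dvd sig_poly \<sigma> (int i) d"
      using pe_dvd_prod[OF pg] by blast
    then have "sig_poly \<sigma> (- int i) ?g dvd d"
      using sig_dvd[of "- int i" ?g "sig_poly \<sigma> (int i) d"] by (simp add: sig_inv2)
    moreover have "sig_poly \<sigma> (- int i) ?g = sig_poly \<sigma> (- int i + (int l + K)) f'" by (simp add: sig_sig)
    ultimately have "- int i + (int l + K) \<le> K" using ex by auto
    then show False using i by simp
  qed
  have "?g dvd w c * sig_poly \<sigma> (int l) d" using g1 by simp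
  then have "?g dvd m * (\<Prod>i<l. sig_poly \<sigma> (int i) d) * sig_poly \<sigma> (int l) (z c)" using hm c by simp
  then have "?g dvd m" using pg g2 g3 by (simp add: prime_elem_dvd_mult_iff)
  then show ?thesis using ge by simp
qed

lemma div_p:
  assumes pf: "prime_elem f'" and ex: "\<forall>j. sig_poly \<sigma> j f' dvd d \<longrightarrow> 0 \<le> j \<and> j \<le> K"
    and fd: "f' dvd d" and red: "Gcd (insert d (z ` {..<n})) = 1"
    and hp: "\<forall>c<n. p * (\<Prod>i\<in>{1..lt}. sig_poly \<sigma> (int i) d) * z c = w c * d"
  shows "f' dvd p"
proof -
  obtain c where c: "c < n" "\<not> f' dvd z c" using red_exists[OF red pf fd] by blast
  have g3: "\<not> f' dvd (\<Prod>i\<in>{1..lt}. sig_poly \<sigma> (int i) d)"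
  proof
    assume "f' dvd (\<Prod>i\<in>{1..lt}. sig_poly \<sigma> (int i) d)"
    then obtain i where i: "i \<in> {1..lt}" "f' dvd sig_poly \<sigma> (int i) d"
      using pe_dvd_prod[OF pf] by blast
    then have "sig_poly \<sigma> (- int i) f' dvd d"
      using sig_dvd[of "- int i" f' "sig_poly \<sigma> (int i) d"] by (simp add: sig_inv2)
    then have "0 \<le> - int i" using ex by blast
    then show False using i by simp
  qed
  have "f' dvd w c * d" using fd by simp
  then have "f' dvd p * (\<Prod>i\<in>{1..lt}. sig_poly \<sigma> (int i) d) * z c" using hp c by simp
  then show "f' dvd p" using pf c g3 by (simp add: prime_elem_dvd_mult_iff)
qed


lemma sp_sum: "sigma_pow \<sigma> k (sum f A) = (\<Sum>x\<in>A. sigma_pow \<sigma> k (f x))"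
proof -
  interpret h: field_hom "sigma_pow \<sigma> k" by (rule sp_field_hom)
  show ?thesis by (rule h.hom_sum)
qed

lemma sp_div: "sigma_pow \<sigma> k (x / y) = sigma_pow \<sigma> k x / sigma_pow \<sigma> k y"
proof -
  interpret h: field_hom "sigma_pow \<sigma> k" by (rule sp_field_hom)
  show ?thesis by (rule h.hom_div)
qed

lemma op_apply_sup:
  assumes "finite S" "{i. L i \<noteq> 0} \<subseteq> S"
  shows "op_apply \<sigma> L y = (\<Sum>i\<in>S. L i * sigma_pow \<sigma> i y)"
  unfolding op_apply_def by (rule sum.mono_neutral_left) (use assms in auto)

lemma ore_sup:
  assumes "finite S1" "{i. L1 i \<noteq> 0} \<subseteq> S1"
  shows "ore_mult \<sigma> L1 L2 k = (\<Sum>i\<in>S1. L1 i * sigma_pow \<sigma> i (L2 (k - i)))"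
  unfolding ore_mult_def by (rule sum.mono_neutral_left) (use assms in auto)

lemma ore_supp:
  assumes "finite S1" "{i. L1 i \<noteq> 0} \<subseteq> S1" "{i. L2 i \<noteq> 0} \<subseteq> S2"
  shows "{k. ore_mult \<sigma> L1 L2 k \<noteq> 0} \<subseteq> (\<lambda>(i,j). i + j) ` (S1 \<times> S2)"
proof
  fix k assume k: "k \<in> {k. ore_mult \<sigma> L1 L2 k \<noteq> 0}"
  show "k \<in> (\<lambda>(i,j). i + j) ` (S1 \<times> S2)"
  proof (rule ccontr)
    assume nk: "k \<notin> (\<lambda>(i,j). i + j) ` (S1 \<times> S2)"
    have "\<forall>i\<in>S1. L2 (k - i) = 0"
    proof
      fix i assume i: "i \<in> S1"
      show "L2 (k - i) = 0"
      proof (rule ccontr)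
        assume "L2 (k - i) \<noteq> 0"
        then have "k - i \<in> S2" using assms(3) by auto
        then have "k \<in> (\<lambda>(i,j). i + j) ` (S1 \<times> S2)" using i by (auto intro!: image_eqI[of _ _ "(i, k - i)"])
        then show False using nk by simp
      qed
    qed
    then have "ore_mult \<sigma> L1 L2 k = 0" unfolding ore_sup[OF assms(1,2)] by (simp add: sp_fh)
    then show False using k by simp
  qed
qed

lemma op_apply_sumL: "op_apply \<sigma> L (sum f A) = (\<Sum>a\<in>A. op_apply \<sigma> L (f a))"
  unfolding op_apply_def sp_sum sum_distrib_left by (rule sum.swap)

lemma op_apply_sumM:
  assumes "finite A" "finite S" "\<And>a. a \<in> A \<Longrightarrow> {i. M a i \<noteq> 0} \<subseteq> S"
  shows "op_apply \<sigma> (\<lambda>k. \<Sum>a\<in>A. M a k) y = (\<Sum>a\<in>A. op_apply \<sigma> (M a) y)"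
proof -
  have s: "{i. (\<Sum>a\<in>A. M a i) \<noteq> 0} \<subseteq> S"
  proof
    fix i assume "i \<in> {i. (\<Sum>a\<in>A. M a i) \<noteq> 0}"
    then obtain a where "a \<in> A" "M a i \<noteq> 0" by (metis (mono_tags, lifting) mem_Collect_eq sum.neutral)
    then show "i \<in> S" using assms(3) by auto
  qed
  have "op_apply \<sigma> (\<lambda>k. \<Sum>a\<in>A. M a k) y = (\<Sum>i\<in>S. (\<Sum>a\<in>A. M a i) * sigma_pow \<sigma> i y)"
    by (rule op_apply_sup[OF assms(2) s])
  also have "\<dots> = (\<Sum>a\<in>A. \<Sum>i\<in>S. M a i * sigma_pow \<sigma> i y)"
    unfolding sum_distrib_right by (rule sum.swap)
  also have "\<dots> = (\<Sum>a\<in>A. op_apply \<sigma> (M a) y)"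
    by (rule sum.cong[OF refl], rule op_apply_sup[symmetric, OF assms(2)]) (use assms(3) in auto)
  finally show ?thesis .
qed

lemma op_ore:
  assumes f1: "finite S1" and s1: "{i. L1 i \<noteq> 0} \<subseteq> S1" and f2: "finite S2" and s2: "{i. L2 i \<noteq> 0} \<subseteq> S2"
  shows "op_apply \<sigma> (ore_mult \<sigma> L1 L2) y = op_apply \<sigma> L1 (op_apply \<sigma> L2 y)"
proof -
  define S3 where "S3 = (\<lambda>(i,j). i + j) ` (S1 \<times> S2)"
  have f3: "finite S3" unfolding S3_def using f1 f2 by simp
  have s3: "{k. ore_mult \<sigma> L1 L2 k \<noteq> 0} \<subseteq> S3" unfolding S3_def by (rule ore_supp[OF f1 s1 s2])
  have inner: "(\<Sum>k\<in>S3. sigma_pow \<sigma> i (L2 (k - i)) * sigma_pow \<sigma> k y)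
      = (\<Sum>j\<in>S2. sigma_pow \<sigma> i (L2 j) * sigma_pow \<sigma> (i + j) y)" if i: "i \<in> S1" for i
  proof -
    have sub: "(\<lambda>j. i + j) ` S2 \<subseteq> S3" unfolding S3_def using i by auto
    have "(\<Sum>k\<in>S3. sigma_pow \<sigma> i (L2 (k - i)) * sigma_pow \<sigma> k y)
        = (\<Sum>k\<in>(\<lambda>j. i + j) ` S2. sigma_pow \<sigma> i (L2 (k - i)) * sigma_pow \<sigma> k y)"
    proof (rule sum.mono_neutral_right[OF f3 sub], intro ballI)
      fix k assume "k \<in> S3 - (\<lambda>j. i + j) ` S2"
      then have "k - i \<notin> S2" by force
      then have "L2 (k - i) = 0" using s2 by auto
      then show "sigma_pow \<sigma> i (L2 (k - i)) * sigma_pow \<sigma> k y = 0" by (simp add: sp_fh)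
    qed
    also have "\<dots> = (\<Sum>j\<in>S2. sigma_pow \<sigma> i (L2 j) * sigma_pow \<sigma> (i + j) y)"
      by (subst sum.reindex) (auto simp: inj_on_def)
    finally show ?thesis .
  qed
  have "op_apply \<sigma> (ore_mult \<sigma> L1 L2) y = (\<Sum>k\<in>S3. ore_mult \<sigma> L1 L2 k * sigma_pow \<sigma> k y)"
    by (rule op_apply_sup[OF f3 s3])
  also have "\<dots> = (\<Sum>k\<in>S3. \<Sum>i\<in>S1. L1 i * (sigma_pow \<sigma> i (L2 (k - i)) * sigma_pow \<sigma> k y))"
    unfolding ore_sup[OF f1 s1] sum_distrib_right by (simp add: mult.assoc)
  also have "\<dots> = (\<Sum>i\<in>S1. L1 i * (\<Sum>k\<in>S3. sigma_pow \<sigma> i (L2 (k - i)) * sigma_pow \<sigma> k y))"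
    unfolding sum_distrib_left by (rule sum.swap)
  also have "\<dots> = (\<Sum>i\<in>S1. L1 i * (\<Sum>j\<in>S2. sigma_pow \<sigma> i (L2 j) * sigma_pow \<sigma> (i + j) y))"
    by (rule sum.cong[OF refl]) (simp add: inner)
  also have "\<dots> = (\<Sum>i\<in>S1. L1 i * sigma_pow \<sigma> i (\<Sum>j\<in>S2. L2 j * sigma_pow \<sigma> j y))"
    by (simp add: sp_sum sp_fh sp_add)
  also have "\<dots> = op_apply \<sigma> L1 (op_apply \<sigma> L2 y)"
    using op_apply_sup[OF f1 s1] op_apply_sup[OF f2 s2] by simp
  finally show ?thesis .
qed

definition suppU :: "nat \<Rightarrow> (nat \<Rightarrow> nat \<Rightarrow> int \<Rightarrow> 'a poly fract) \<Rightarrow> int set" where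
  "suppU n M = (\<Union>r<n. \<Union>c<n. {k. M r c k \<noteq> 0})"

lemma suppU_fin: "finite_omat n M \<Longrightarrow> finite (suppU n M)"
  unfolding suppU_def finite_omat_def by auto

lemma suppU_sub: "r < n \<Longrightarrow> c < n \<Longrightarrow> {k. M r c k \<noteq> 0} \<subseteq> suppU n M"
  unfolding suppU_def by auto

lemma omat_assoc:
  assumes fP: "finite_omat n P" and fQ: "finite_omat n Q" and r: "r < n"
  shows "omat_apply \<sigma> n (omat_mult \<sigma> n P Q) y r = omat_apply \<sigma> n P (omat_apply \<sigma> n Q y) r"
proof -
  let ?SP = "suppU n P" and ?SQ = "suppU n Q"
  let ?S = "(\<lambda>(i,j). i + j) ` (?SP \<times> ?SQ)"
  have fin: "finite ?SP" "finite ?SQ" "finite ?S" using suppU_fin[OF fP] suppU_fin[OF fQ] by auto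
  have "omat_apply \<sigma> n (omat_mult \<sigma> n P Q) y r
      = (\<Sum>c<n. \<Sum>l<n. op_apply \<sigma> (ore_mult \<sigma> (P r l) (Q l c)) (y c))"
    unfolding omat_apply_def omat_mult_def
  proof (rule sum.cong[OF refl])
    fix c assume c: "c \<in> {..<n}"
    show "op_apply \<sigma> (\<lambda>k. \<Sum>l<n. ore_mult \<sigma> (P r l) (Q l c) k) (y c)
        = (\<Sum>l<n. op_apply \<sigma> (ore_mult \<sigma> (P r l) (Q l c)) (y c))"
    proof (rule op_apply_sumM[OF _ fin(3)])
      fix l assume "l \<in> {..<n}"
      then show "{i. ore_mult \<sigma> (P r l) (Q l c) i \<noteq> 0} \<subseteq> ?S"
        by (intro ore_supp[OF fin(1)] suppU_sub) (use r c in auto)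
    qed simp
  qed
  also have "\<dots> = (\<Sum>c<n. \<Sum>l<n. op_apply \<sigma> (P r l) (op_apply \<sigma> (Q l c) (y c)))"
    by (intro sum.cong refl op_ore[OF fin(1) _ fin(2)] suppU_sub) (use r in auto)
  also have "\<dots> = (\<Sum>l<n. \<Sum>c<n. op_apply \<sigma> (P r l) (op_apply \<sigma> (Q l c) (y c)))"
    by (rule sum.swap)
  also have "\<dots> = omat_apply \<sigma> n P (omat_apply \<sigma> n Q y) r"
    unfolding omat_apply_def op_apply_sumL ..
  finally show ?thesis .
qed


lemma rp_sum: "(\<And>x. x \<in> A \<Longrightarrow> f x \<in> range pf) \<Longrightarrow> sum f A \<in> range pf"
proof (induct A rule: infinite_finite_induct)
  case (infinite A) then show ?case by (metis pf_0 rangeI sum.infinite)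
next
  case empty then show ?case by (metis pf_0 rangeI sum.empty)
next
  case (insert x F)
  then obtain a b where "f x = pf a" "sum f F = pf b" by blast
  then have "sum f (insert x F) = pf (a + b)" using insert by simp
  then show ?case by blast
qed

lemma rp_mult: fixes x y :: "'a poly fract" assumes "x \<in> range pf" "y \<in> range pf" shows "x * y \<in> range pf"
proof -
  obtain a b where "x = pf a" "y = pf b" using assms by blast
  then have "x * y = pf (a * b)" by simp
  then show ?thesis by blast
qed
lemma rp_add: fixes x y :: "'a poly fract" assumes "x \<in> range pf" "y \<in> range pf" shows "x + y \<in> range pf"
proof -
  obtain a b where "x = pf a" "y = pf b" using assms by blast
  then have "x + y = pf (a + b)" by simp
  then show ?thesis by blast
qed
lemma rp_diff: fixes x y :: "'a poly fract" assumes "x \<in> range pf" "y \<in> range pf" shows "x - y \<in> range pf"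
proof -
  obtain a b where "x = pf a" "y = pf b" using assms by blast
  then have "x - y = pf (a - b)" by (simp add: pf.hom_minus)
  then show ?thesis by blast
qed

lemma poly_omat_fin: "finite_omat n (poly_omat l C)"
  unfolding finite_omat_def poly_omat_def
  by (auto intro: finite_subset[of _ "{0..int l}"])

lemma poly_omat_apply:
  "op_apply \<sigma> (poly_omat l C r c) x = (\<Sum>i\<le>l. pf (C i r c) * sigma_pow \<sigma> (int i) x)"
proof -
  have s: "{k. poly_omat l C r c k \<noteq> 0} \<subseteq> int ` {..l}"
  proof
    fix k assume "k \<in> {k. poly_omat l C r c k \<noteq> 0}"
    then have "0 \<le> k" "k \<le> int l" by (auto simp: poly_omat_def split: if_splits)
    then show "k \<in> int ` {..l}" by (intro image_eqI[of _ _ "nat k"]) auto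
  qed
  have "op_apply \<sigma> (poly_omat l C r c) x = (\<Sum>k\<in>int ` {..l}. poly_omat l C r c k * sigma_pow \<sigma> k x)"
    by (rule op_apply_sup[OF _ s]) simp
  also have "\<dots> = (\<Sum>i\<le>l. poly_omat l C r c (int i) * sigma_pow \<sigma> (int i) x)"
    by (subst sum.reindex) auto
  also have "\<dots> = (\<Sum>i\<le>l. pf (C i r c) * sigma_pow \<sigma> (int i) x)"
    by (rule sum.cong) (auto simp: poly_omat_def)
  finally show ?thesis .
qed

lemma solve:
  fixes B :: "nat \<Rightarrow> nat \<Rightarrow> 'a poly" and \<mu> E :: "'a poly"
  assumes dB: "det (pmat n B) \<noteq> 0"
    and cd: "common_denom n (the (mat_inverse (map_mat pf (pmat n B)))) \<mu>"
    and eq: "\<forall>r<n. (\<Sum>c<n. pf (B r c) * w c) = R r"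
    and ER: "\<forall>r<n. pf E * R r \<in> range pf"
  shows "\<forall>c<n. pf \<mu> * pf E * w c \<in> range pf"
proof -
  let ?M = "map_mat pf (pmat n B)"
  have Mc: "?M \<in> carrier_mat n n" by (simp add: pmat_def)
  have "det ?M = pf (det (pmat n B))" by (rule pf.hom_det)
  then have dM: "det ?M \<noteq> 0" using dB by simp
  have "mat_inverse ?M \<noteq> None"
  proof
    assume "mat_inverse ?M = None"
    from mat_inverse(1)[OF Mc this, where b="()"] det_non_zero_imp_unit[OF Mc dM, where b="()"] show False by blast
  qed
  then obtain Bi where Bi: "mat_inverse ?M = Some Bi" by blast
  have BiM: "Bi * ?M = 1\<^sub>m n" and Bic: "Bi \<in> carrier_mat n n" using mat_inverse(2)[OF Mc Bi] by auto
  have Mij: "\<And>i j. i<n \<Longrightarrow> j<n \<Longrightarrow> ?M $$ (i,j) = pf (B i j)" by (simp add: pmat_def)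
  have prodE: "(\<Sum>r<n. Bi $$ (c,r) * pf (B r c')) = (if c = c' then 1 else 0)" if c: "c<n" "c'<n" for c c'
  proof -
    have "(Bi * ?M) $$ (c,c') = (if c = c' then 1 else 0)" using BiM c by simp
    moreover have "(Bi * ?M) $$ (c,c') = (\<Sum>r<n. Bi $$ (c,r) * pf (B r c'))"
      using Bic c by (simp add: scalar_prod_def Mij lessThan_atLeast0 pmat_def)
    ultimately show ?thesis by simp
  qed
  have wc: "w c = (\<Sum>r<n. Bi $$ (c,r) * R r)" if c: "c < n" for c
  proof -
    have "(\<Sum>r<n. Bi $$ (c,r) * R r) = (\<Sum>r<n. Bi $$ (c,r) * (\<Sum>c'<n. pf (B r c') * w c'))"
      using eq by simp
    also have "\<dots> = (\<Sum>c'<n. (\<Sum>r<n. Bi $$ (c,r) * pf (B r c')) * w c')"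
      unfolding sum_distrib_left sum_distrib_right by (subst sum.swap) (simp add: mult.assoc)
    also have "\<dots> = (\<Sum>c'<n. (if c = c' then 1 else 0) * w c')"
      by (rule sum.cong) (simp_all add: prodE c)
    also have "\<dots> = (\<Sum>c'<n. if c = c' then w c' else 0)" by (rule sum.cong) auto
    also have "\<dots> = w c" using c by (simp add: sum.delta)
    finally show ?thesis by simp
  qed
  have cd': "\<forall>r<n. \<forall>c<n. \<exists>q. pf \<mu> * Bi $$ (r, c) = pf q" using cd Bi by (simp add: common_denom_def)
  show ?thesis
  proof (intro allI impI)
    fix c assume c: "c < n"
    have "pf \<mu> * pf E * w c = (\<Sum>r<n. (pf \<mu> * Bi $$ (c,r)) * (pf E * R r))"
      unfolding wc[OF c] sum_distrib_left by (rule sum.cong) (simp_all add: mult_ac)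
    also have "\<dots> \<in> range pf"
    proof (rule rp_sum)
      fix r assume r: "r \<in> {..<n}"
      obtain q where q: "pf \<mu> * Bi $$ (c,r) = pf q" using cd' c r by blast
      have "pf \<mu> * Bi $$ (c,r) \<in> range pf" unfolding q by (rule rangeI)
      moreover have "pf E * R r \<in> range pf" using ER r by simp
      ultimately show "(pf \<mu> * Bi $$ (c,r)) * (pf E * R r) \<in> range pf" by (rule rp_mult)
    qed
    finally show "pf \<mu> * pf E * w c \<in> range pf" .
  qed
qed


lemma per_dvd: "per \<sigma> x dvd x"
proof (cases "Pi_monomial \<sigma>")
  case True
  have "[:-0, 1:] ^ Polynomial.order 0 x dvd x" by (rule order_1)
  then show ?thesis using True by (simp add: per_def)
next
  case False then show ?thesis by (simp add: per_def)
qed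

lemma ap_eq: "x = per \<sigma> x * ap \<sigma> x"
  unfolding ap_def using per_dvd[of x] by simp

lemma ap_dvd: "ap \<sigma> x dvd x"
proof -
  have "x = per \<sigma> x * ap \<sigma> x" by (rule ap_eq)
  also have "\<dots> = ap \<sigma> x * per \<sigma> x" by (rule mult.commute)
  finally show ?thesis by (rule dvdI)
qed

lemma ap_nz: "x \<noteq> 0 \<Longrightarrow> ap \<sigma> x \<noteq> 0"
  using ap_eq[of x] by (metis mult_zero_right)

lemma dvd_ap:
  assumes pg: "prime_elem g" and nt: "NT g" and gx: "g dvd x"
  shows "g dvd ap \<sigma> x"
proof -
  have "g dvd per \<sigma> x * ap \<sigma> x" using gx ap_eq[of x] by simp
  then have "g dvd per \<sigma> x \<or> g dvd ap \<sigma> x" using pg by (simp add: prime_elem_dvd_mult_iff)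
  moreover have "\<not> g dvd per \<sigma> x"
  proof
    assume gp: "g dvd per \<sigma> x"
    show False
    proof (cases "Pi_monomial \<sigma>")
      case True
      then have "g dvd [:0,1:] ^ Polynomial.order 0 x" using gp by (simp add: per_def)
      then have "g dvd [:0,1:]" using pg prime_elem_dvd_power by blast
      then show False using nt True by (simp add: NT_def)
    next
      case False
      then have "g dvd 1" using gp by (simp add: per_def)
      then show False using pg by (simp add: prime_elem_def)
    qed
  qed
  ultimately show ?thesis by blast
qed

lemma lin_dvd:
  fixes f :: "'a poly"
  assumes pf: "prime_elem f" and ft: "f dvd [:0,1:]"
  shows "[:0,1:] dvd f"
proof -
  obtain g where g: "[:0,1:] = f * g" using ft by (auto elim: dvdE)
  have f0: "f \<noteq> 0" and fu: "\<not> is_unit f" using pf by (auto simp: prime_elem_def)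
  have g0: "g \<noteq> 0" using g by auto
  have df: "degree f \<noteq> 0" using f0 fu is_unit_iff_degree by blast
  have "degree ([:0,1:] :: 'a poly) = degree f + degree g" using g f0 g0 by (simp add: degree_mult_eq)
  then have "degree g = 0" using df by simp
  then obtain c where gc: "g = [:c:]" by (metis degree_eq_zeroE)
  then have c0: "c \<noteq> 0" using g0 by simp
  have "f = Polynomial.smult (inverse c) [:0,1:]" using g gc c0 by (simp add: smult_smult)
  moreover have "[:0,1:] dvd Polynomial.smult (inverse c) ([:0,1:] :: 'a poly)" by (rule dvd_smult) simp
  ultimately show ?thesis by simp
qed

lemma NT_of_ap:
  assumes pf: "prime_elem f" and fa: "f dvd ap \<sigma> x" and x0: "x \<noteq> 0"
  shows "NT f"
  unfolding NT_def
proof (intro impI notI)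
  assume P: "Pi_monomial \<sigma>" and ft: "f dvd [:0,1:]"
  have "[:0,1:] dvd ap \<sigma> x" using lin_dvd[OF pf ft] fa dvd_trans by blast
  then have "per \<sigma> x * [:0,1:] dvd per \<sigma> x * ap \<sigma> x" by (intro mult_dvd_mono dvd_refl)
  then have "[:0,1:] ^ Suc (Polynomial.order 0 x) dvd x" using ap_eq[of x] P by (simp add: per_def mult.commute)
  then have "[:-0,1:] ^ Suc (Polynomial.order 0 x) dvd x" by simp
  then show False using order_2[OF x0, of 0] by blast
qed

lemma rp_frac:
  assumes "b dvd E" "b \<noteq> 0"
  shows "pf E * (pf a / pf b) \<in> range pf"
proof -
  obtain e where e: "E = b * e" using assms(1) by (auto elim: dvdE)
  have "pf E * (pf a / pf b) = pf (e * a)" using assms(2) unfolding e by simp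
  then show ?thesis by blast
qed

lemma frac_eq:
  assumes "D \<noteq> 0" "pf M * (pf Z / pf D) = pf W"
  shows "M * Z = W * D"
proof -
  have "pf (M * Z) = pf (W * D)" using assms by (simp add: field_simps)
  then show ?thesis by (simp only: pf_inj)
qed

end

theorem lemma3:
  fixes \<sigma> :: "'a::{field_gcd,field_char_0} poly fract \<Rightarrow> 'a poly fract"
    and n l lt :: nat
    and A At :: "nat \<Rightarrow> nat \<Rightarrow> nat \<Rightarrow> 'a poly"
    and b z :: "nat \<Rightarrow> 'a poly"
    and P :: "nat \<Rightarrow> nat \<Rightarrow> int \<Rightarrow> 'a poly fract"
    and m p d :: "'a poly"
  assumes ext: "PiSigma_ext \<sigma>"
    and detAl: "det (pmat n (A l)) \<noteq> 0"
    and P_unimod: "unimodular \<sigma> n P"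
    and PA: "\<forall>r<n. \<forall>c<n. omat_mult \<sigma> n P (poly_omat l A) r c = poly_omat lt At r c"
    and Pb: "\<forall>r<n. \<exists>q. omat_apply \<sigma> n P (\<lambda>c. pf (b c)) r = pf q"
    and detAt0: "det (pmat n (At 0)) \<noteq> 0"
    and m_def: "the_common_denom n (the (mat_inverse (map_mat pf (pmat n (A l))))) m"
    and p_def: "the_common_denom n (the (mat_inverse (map_mat pf (pmat n (At 0))))) p"
    and d_nz: "d \<noteq> 0"
    and reduced: "Gcd (insert d (z ` {..<n})) = 1"
    and sol: "\<forall>r<n. omat_apply \<sigma> n (poly_omat l A) (\<lambda>c. pf (z c) / pf d) r = pf (b r)"
  shows "disp \<sigma> (ap \<sigma> d) (ap \<sigma> d) \<le> disp \<sigma> (sig_poly \<sigma> (- int l) (ap \<sigma> m)) (ap \<sigma> p)"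
proof -
  interpret PS \<sigma> by unfold_locales (rule ext)
  define Y where "Y = (\<lambda>c. pf (z c) / pf d)"
  have SY: "\<And>i c. sigma_pow \<sigma> i (Y c) = pf (sig_poly \<sigma> i (z c)) / pf (sig_poly \<sigma> i d)"
    by (simp add: Y_def sp_div sig_pf)
  have oa: "\<And>M r L. omat_apply \<sigma> n (poly_omat L M) Y r = (\<Sum>c<n. \<Sum>i\<le>L. pf (M i r c) * sigma_pow \<sigma> (int i) (Y c))"
    unfolding omat_apply_def poly_omat_apply ..
  have Eq1: "\<forall>r<n. (\<Sum>c<n. \<Sum>i\<le>l. pf (A i r c) * sigma_pow \<sigma> (int i) (Y c)) = pf (b r)"
  proof -
    have "\<forall>r<n. omat_apply \<sigma> n (poly_omat l A) Y r = pf (b r)" using sol by (simp add: Y_def)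
    then show ?thesis unfolding oa .
  qed
  have fP: "finite_omat n P" using P_unimod by (simp add: unimodular_def)
  have Eq2: "\<forall>r<n. \<exists>q. (\<Sum>c<n. \<Sum>i\<le>lt. pf (At i r c) * sigma_pow \<sigma> (int i) (Y c)) = pf q"
  proof (intro allI impI)
    fix r assume r: "r < n"
    have "omat_apply \<sigma> n (poly_omat lt At) Y r = omat_apply \<sigma> n (omat_mult \<sigma> n P (poly_omat l A)) Y r"
      unfolding omat_apply_def using PA r by simp
    also have "\<dots> = omat_apply \<sigma> n P (omat_apply \<sigma> n (poly_omat l A) Y) r"
      by (rule omat_assoc[OF fP poly_omat_fin r])
    also have "\<dots> = omat_apply \<sigma> n P (\<lambda>c. pf (b c)) r"
      unfolding omat_apply_def by (rule sum.cong[OF refl]) (use sol in \<open>simp add: Y_def omat_apply_def\<close>)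
    finally obtain q where "omat_apply \<sigma> n (poly_omat lt At) Y r = pf q" using Pb r by auto
    then show "\<exists>q. (\<Sum>c<n. \<Sum>i\<le>lt. pf (At i r c) * sigma_pow \<sigma> (int i) (Y c)) = pf q"
      unfolding oa by blast
  qed
  have sd0: "\<And>i. sig_poly \<sigma> i d \<noteq> 0" using d_nz by (simp add: sig_eq0)
  define E where "E = (\<Prod>i<l. sig_poly \<sigma> (int i) d)"
  have hm: "\<forall>c<n. \<exists>W. m * E * sig_poly \<sigma> (int l) (z c) = W * sig_poly \<sigma> (int l) d"
  proof -
    define R where "R = (\<lambda>r. pf (b r) - (\<Sum>c<n. \<Sum>i<l. pf (A i r c) * sigma_pow \<sigma> (int i) (Y c)))"
    have eq: "\<forall>r<n. (\<Sum>c<n. pf (A l r c) * sigma_pow \<sigma> (int l) (Y c)) = R r"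
    proof (intro allI impI)
      fix r assume r: "r < n"
      have "(\<Sum>c<n. \<Sum>i\<le>l. pf (A i r c) * sigma_pow \<sigma> (int i) (Y c))
         = (\<Sum>c<n. \<Sum>i<l. pf (A i r c) * sigma_pow \<sigma> (int i) (Y c)) + (\<Sum>c<n. pf (A l r c) * sigma_pow \<sigma> (int l) (Y c))"
        unfolding lessThan_Suc_atMost[symmetric] sum.lessThan_Suc sum.distrib ..
      then show "(\<Sum>c<n. pf (A l r c) * sigma_pow \<sigma> (int l) (Y c)) = R r"
        using Eq1 r unfolding R_def by (simp add: algebra_simps)
    qed
    have ER: "\<forall>r<n. pf E * R r \<in> range pf"
    proof (intro allI impI)
      fix r assume r: "r < n"
      have "pf E * R r = pf E * pf (b r) - (\<Sum>c<n. \<Sum>i<l. pf (A i r c) * (pf E * sigma_pow \<sigma> (int i) (Y c)))"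
        unfolding R_def by (simp add: right_diff_distrib sum_distrib_left mult_ac)
      also have "\<dots> \<in> range pf"
      proof (rule rp_diff)
        show "pf E * pf (b r) \<in> range pf" by (metis pf_mult rangeI)
      next
        show "(\<Sum>c<n. \<Sum>i\<in>{..<l}. pf (A i r c) * (pf E * sigma_pow \<sigma> (int i) (Y c))) \<in> range pf"
        proof (intro rp_sum)
          fix c i assume "c \<in> {..<n}" "i \<in> {..<l}"
          then have "sig_poly \<sigma> (int i) d dvd E" unfolding E_def by (intro dvd_prodI) auto
          then have "pf E * sigma_pow \<sigma> (int i) (Y c) \<in> range pf" unfolding SY by (rule rp_frac[OF _ sd0])
          then show "pf (A i r c) * (pf E * sigma_pow \<sigma> (int i) (Y c)) \<in> range pf" by (rule rp_mult[OF rangeI])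
        qed
      qed
      finally show "pf E * R r \<in> range pf" .
    qed
    have cdm: "common_denom n (the (mat_inverse (map_mat pf (pmat n (A l))))) m"
      using m_def by (simp add: the_common_denom_def)
    have X: "\<forall>c<n. pf m * pf E * sigma_pow \<sigma> (int l) (Y c) \<in> range pf"
      by (rule solve[OF detAl cdm eq ER])
    show ?thesis
    proof (intro allI impI)
      fix c assume c: "c < n"
      obtain W where W: "pf m * pf E * sigma_pow \<sigma> (int l) (Y c) = pf W" using X c by blast
      have "pf (m * E) * (pf (sig_poly \<sigma> (int l) (z c)) / pf (sig_poly \<sigma> (int l) d)) = pf W"
        using W unfolding SY by (simp only: pf_mult)
      from frac_eq[OF sd0 this] show "\<exists>W. m * E * sig_poly \<sigma> (int l) (z c) = W * sig_poly \<sigma> (int l) d" by blast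
    qed
  qed
  then have "\<forall>c. \<exists>W. c < n \<longrightarrow> m * E * sig_poly \<sigma> (int l) (z c) = W * sig_poly \<sigma> (int l) d" by blast
  then have "\<exists>wm. \<forall>c. c < n \<longrightarrow> m * E * sig_poly \<sigma> (int l) (z c) = wm c * sig_poly \<sigma> (int l) d" by (rule choice)
  then obtain wm where wm0: "\<forall>c<n. m * E * sig_poly \<sigma> (int l) (z c) = wm c * sig_poly \<sigma> (int l) d" by blast
  have wm: "\<forall>c<n. m * (\<Prod>i<l. sig_poly \<sigma> (int i) d) * sig_poly \<sigma> (int l) (z c) = wm c * sig_poly \<sigma> (int l) d"
    using wm0 unfolding E_def .
  define E' where "E' = (\<Prod>i\<in>{1..lt}. sig_poly \<sigma> (int i) d)"
  have hp: "\<forall>c<n. \<exists>W. p * E' * z c = W * d"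
  proof -
    have "\<forall>r. \<exists>q. r < n \<longrightarrow> (\<Sum>c<n. \<Sum>i\<le>lt. pf (At i r c) * sigma_pow \<sigma> (int i) (Y c)) = pf q"
      using Eq2 by blast
    then have "\<exists>q. \<forall>r. r < n \<longrightarrow> (\<Sum>c<n. \<Sum>i\<le>lt. pf (At i r c) * sigma_pow \<sigma> (int i) (Y c)) = pf (q r)"
      by (rule choice)
    then obtain q where q: "\<forall>r<n. (\<Sum>c<n. \<Sum>i\<le>lt. pf (At i r c) * sigma_pow \<sigma> (int i) (Y c)) = pf (q r)"
      by blast
    define R where "R = (\<lambda>r. pf (q r) - (\<Sum>c<n. \<Sum>i\<in>{1..lt}. pf (At i r c) * sigma_pow \<sigma> (int i) (Y c)))"
    have eq: "\<forall>r<n. (\<Sum>c<n. pf (At 0 r c) * Y c) = R r"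
    proof (intro allI impI)
      fix r assume r: "r < n"
      have "(\<Sum>c<n. \<Sum>i\<le>lt. pf (At i r c) * sigma_pow \<sigma> (int i) (Y c))
         = (\<Sum>c<n. pf (At 0 r c) * Y c) + (\<Sum>c<n. \<Sum>i\<in>{1..lt}. pf (At i r c) * sigma_pow \<sigma> (int i) (Y c))"
        unfolding atMost_atLeast0 sum.atLeast_Suc_atMost[OF le0] sum.distrib by simp
      then show "(\<Sum>c<n. pf (At 0 r c) * Y c) = R r"
        using q r unfolding R_def by (simp add: algebra_simps)
    qed
    have ER: "\<forall>r<n. pf E' * R r \<in> range pf"
    proof (intro allI impI)
      fix r assume r: "r < n"
      have "pf E' * R r = pf E' * pf (q r) - (\<Sum>c<n. \<Sum>i\<in>{1..lt}. pf (At i r c) * (pf E' * sigma_pow \<sigma> (int i) (Y c)))"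
        unfolding R_def by (simp add: right_diff_distrib sum_distrib_left mult_ac)
      also have "\<dots> \<in> range pf"
      proof (rule rp_diff)
        show "pf E' * pf (q r) \<in> range pf" by (metis pf_mult rangeI)
      next
        show "(\<Sum>c<n. \<Sum>i\<in>{1..lt}. pf (At i r c) * (pf E' * sigma_pow \<sigma> (int i) (Y c))) \<in> range pf"
        proof (intro rp_sum)
          fix c i assume "c \<in> {..<n}" "i \<in> {1..lt}"
          then have "sig_poly \<sigma> (int i) d dvd E'" unfolding E'_def by (intro dvd_prodI) auto
          then have "pf E' * sigma_pow \<sigma> (int i) (Y c) \<in> range pf" unfolding SY by (rule rp_frac[OF _ sd0])
          then show "pf (At i r c) * (pf E' * sigma_pow \<sigma> (int i) (Y c)) \<in> range pf" by (rule rp_mult[OF rangeI])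
        qed
      qed
      finally show "pf E' * R r \<in> range pf" .
    qed
    have cdp: "common_denom n (the (mat_inverse (map_mat pf (pmat n (At 0))))) p"
      using p_def by (simp add: the_common_denom_def)
    have X: "\<forall>c<n. pf p * pf E' * Y c \<in> range pf"
      by (rule solve[OF detAt0 cdp eq ER])
    show ?thesis
    proof (intro allI impI)
      fix c assume c: "c < n"
      obtain W where W: "pf p * pf E' * Y c = pf W" using X c by blast
      have "pf (p * E') * (pf (z c) / pf d) = pf W"
        using W unfolding Y_def by (simp only: pf_mult)
      from frac_eq[OF d_nz this] show "\<exists>W. p * E' * z c = W * d" by blast
    qed
  qed
  then have "\<forall>c. \<exists>W. c < n \<longrightarrow> p * E' * z c = W * d" by blast
  then have "\<exists>wp. \<forall>c. c < n \<longrightarrow> p * E' * z c = wp c * d" by (rule choice)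
  then obtain wp where wp0: "\<forall>c<n. p * E' * z c = wp c * d" by blast
  have wp: "\<forall>c<n. p * (\<Prod>i\<in>{1..lt}. sig_poly \<sigma> (int i) d) * z c = wp c * d"
    using wp0 unfolding E'_def .
  have m0: "m \<noteq> 0" using m_def by (simp add: the_common_denom_def common_denom_def)
  show ?thesis
    unfolding disp_def
  proof (rule Sup_mono)
    fix a assume "a \<in> (\<lambda>k. ereal (real k)) ` spread \<sigma> (ap \<sigma> d) (ap \<sigma> d)"
    then obtain k0 where a: "a = ereal (real k0)" and k0: "k0 \<in> spread \<sigma> (ap \<sigma> d) (ap \<sigma> d)" by blast
    let ?G = "gcd (ap \<sigma> d) (sig_poly \<sigma> (int k0) (ap \<sigma> d))"
    have dG: "degree ?G \<noteq> 0" using k0 unfolding spread_def by blast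
    then have G0: "?G \<noteq> 0" by (metis degree_0)
    have Gu: "\<not> is_unit ?G" using is_unit_iff_degree[OF G0] dG by simp
    obtain h where hG: "h dvd ?G" and ph: "prime h" using prime_divisor_exists[OF G0 Gu] by blast
    have peh: "prime_elem h" using ph by simp
    define f where "f = sig_poly \<sigma> (- int k0) h"
    have pf': "prime_elem f" unfolding f_def by (rule sig_prime[OF peh])
    have fk: "sig_poly \<sigma> (int k0) f = h" by (simp add: f_def sig_inv1)
    have "h dvd sig_poly \<sigma> (int k0) (ap \<sigma> d)" using hG by (meson dvd_trans gcd_dvd2)
    then have fap: "f dvd ap \<sigma> d" using sig_dvd[of "int k0" f "ap \<sigma> d"] fk by simp
    have hap: "sig_poly \<sigma> (int k0) f dvd ap \<sigma> d" using hG fk by (metis dvd_trans gcd_dvd1)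
    have apd: "ap \<sigma> d dvd d" by (rule ap_dvd)
    have ntf: "NT f" by (rule NT_of_ap[OF pf' fap d_nz])
    obtain f' K where pf'': "prime_elem f'" and nt': "NT f'" and kK: "int k0 \<le> K" and f'd: "f' dvd d"
      and fKd: "sig_poly \<sigma> K f' dvd d" and ex: "\<forall>j. sig_poly \<sigma> j f' dvd d \<longrightarrow> 0 \<le> j \<and> j \<le> K"
      using core[OF d_nz pf' ntf dvd_trans[OF fap apd] _ dvd_trans[OF hap apd]] by auto
    have gm: "sig_poly \<sigma> (K + int l) f' dvd m" by (rule div_m[OF pf'' ex fKd reduced wm])
    have fp: "f' dvd p" by (rule div_p[OF pf'' ex f'd reduced wp])
    have gm': "sig_poly \<sigma> (K + int l) f' dvd ap \<sigma> m"
      by (rule dvd_ap[OF sig_prime[OF pf''] NT_sig[OF nt'] gm])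
    have fp': "f' dvd ap \<sigma> p" by (rule dvd_ap[OF pf'' nt' fp])
    let ?q = "sig_poly \<sigma> K f'"
    have q1: "?q dvd sig_poly \<sigma> (- int l) (ap \<sigma> m)"
    proof -
      have "sig_poly \<sigma> (- int l) (sig_poly \<sigma> (K + int l) f') dvd sig_poly \<sigma> (- int l) (ap \<sigma> m)"
        using gm' by (simp add: sig_dvd)
      then show ?thesis by (simp add: sig_sig)
    qed
    have K0: "0 \<le> K" using kK by simp
    have q2: "?q dvd sig_poly \<sigma> (int (nat K)) (ap \<sigma> p)" using fp' K0 by (simp add: sig_dvd)
    let ?H = "gcd (sig_poly \<sigma> (- int l) (ap \<sigma> m)) (sig_poly \<sigma> (int (nat K)) (ap \<sigma> p))"
    have qH: "?q dvd ?H" using q1 q2 by simp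
    have H0: "?H \<noteq> 0" using ap_nz[OF m0] by (simp add: sig_eq0)
    have "\<not> is_unit ?q" using sig_prime[OF pf'', of K] by (simp add: prime_elem_def)
    then have "\<not> is_unit ?H" using qH by (meson dvd_trans)
    then have "degree ?H \<noteq> 0" using H0 is_unit_iff_degree by blast
    then have "nat K \<in> spread \<sigma> (sig_poly \<sigma> (- int l) (ap \<sigma> m)) (ap \<sigma> p)" by (simp add: spread_def)
    moreover have "a \<le> ereal (real (nat K))" using a kK by simp
    ultimately show "\<exists>b\<in>(\<lambda>k. ereal (real k)) ` spread \<sigma> (sig_poly \<sigma> (- int l) (ap \<sigma> m)) (ap \<sigma> p). a \<le> b"
      by blast
  qed
qed

end
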